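(* Let $\underline A=(A_1,\dots,A_m)\in{\rm Mat}(d,\mathbb{R})^m$ and $1\le k\le d$, and assume (1) $\mathrm{rank}(A_j)=k$ for all $j$, and (2) $\mathrm{rank}(A_aA_b)=k$ for every $a,b\in\{1,\dots,m\}$. For $1\le l\le m$ let $R_l:=\mathrm{Range}(A_l)$. Then for every $n\in\mathbb N$ and $i_1,\dots,i_n\in\{1,\dots,m\}$, the restriction $A_lA_{i_1}\cdots A_{i_n}|_{R_l}:R_l\to R_l$ is a linear isomorphism. Let $\mathcal G_l\subseteq\mathrm{GL}(R_l)$ be the group generated by all these automorphisms of $R_l$. Then: (a) for all $1\le i,j\le m$ the groups $\mathcal G_i$ and $\mathcal G_j$ are conjugate; (b) if some $\mathcal G_l$ is Zariski dense in $\mathrm{GL}(R_l)$, then $\wedge_i\underline A$ is irreducible for all $1\le i\le k$.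
   Context: $\wedge_iA$ denotes the $i$-th exterior power of a matrix $A$ (the matrix of its $i\times i$ minors) and $\wedge_i\underline A=(\wedge_iA_1,\dots,\wedge_iA_m)$. A tuple $(D_1,\dots,D_m)$ of $N\times N$ real matrices is called reducible if there exist subspaces $V_1,\dots,V_m$ with $\{0\}\ne V_j\subsetneq\mathrm{Range}(D_j)$ and $D_aV_b=V_a$ for all $a,b\in\{1,\dots,m\}$; otherwise it is irreducible. *)

theory Defs
  imports "HOL-Analysis.Analysis" "HOL-Algebra.Generated_Groups"
begin

text \<open>A matrix on a finite index set S is a function D :: 'i => 'i => real (entry D r c);
  vectors are functions 'i => real vanishing outside S.\<close>

definition fvecs :: "'i set \<Rightarrow> ('i \<Rightarrow> real) set" where
  "fvecs S = {v. \<forall>x. x \<notin> S \<longrightarrow> v x = 0}"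

definition mv :: "'i set \<Rightarrow> ('i \<Rightarrow> 'i \<Rightarrow> real) \<Rightarrow> ('i \<Rightarrow> real) \<Rightarrow> ('i \<Rightarrow> real)" where
  "mv S D v = (\<lambda>r. if r \<in> S then (\<Sum>c\<in>S. D r c * v c) else 0)"

definition fsubspace :: "'i set \<Rightarrow> ('i \<Rightarrow> real) set \<Rightarrow> bool" where
  "fsubspace S V \<longleftrightarrow> V \<subseteq> fvecs S \<and> (\<lambda>_. 0) \<in> V
     \<and> (\<forall>u\<in>V. \<forall>w\<in>V. (\<lambda>x. u x + w x) \<in> V)
     \<and> (\<forall>c::real. \<forall>u\<in>V. (\<lambda>x. c * u x) \<in> V)"

definition mrange :: "'i set \<Rightarrow> ('i \<Rightarrow> 'i \<Rightarrow> real) \<Rightarrow> ('i \<Rightarrow> real) set" where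
  "mrange S D = mv S D ` fvecs S"

definition reducible_tuple :: "'i set \<Rightarrow> nat \<Rightarrow> (nat \<Rightarrow> 'i \<Rightarrow> 'i \<Rightarrow> real) \<Rightarrow> bool" where
  "reducible_tuple S m D \<longleftrightarrow> (\<exists>V :: nat \<Rightarrow> ('i \<Rightarrow> real) set.
      (\<forall>j\<in>{1..m}. fsubspace S (V j) \<and> V j \<noteq> {\<lambda>_. 0} \<and> V j \<subset> mrange S (D j))
    \<and> (\<forall>a\<in>{1..m}. \<forall>b\<in>{1..m}. mv S (D a) ` V b = V a))"

definition irreducible_tuple :: "'i set \<Rightarrow> nat \<Rightarrow> (nat \<Rightarrow> 'i \<Rightarrow> 'i \<Rightarrow> real) \<Rightarrow> bool" where
  "irreducible_tuple S m D \<longleftrightarrow> \<not> reducible_tuple S m D"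

text \<open>A fixed enumeration of the finite index type, used to order the rows/columns
  of each minor.  (Irreducibility does not depend on this choice.)\<close>
definition dord :: "'d::finite \<Rightarrow> nat" where
  "dord = (SOME f. bij_betw f (UNIV :: 'd set) {..<CARD('d)})"

definition ilist :: "'d::finite set \<Rightarrow> 'd list" where
  "ilist I = map (inv_into UNIV dord) (sorted_list_of_set (dord ` I))"

definition ldet :: "nat \<Rightarrow> (nat \<Rightarrow> nat \<Rightarrow> real) \<Rightarrow> real" where
  "ldet n M = sum (\<lambda>p. of_int (sign p) * prod (\<lambda>r. M r (p r)) {..<n}) {p. p permutes {..<n}}"

definition ext_idx :: "nat \<Rightarrow> 'd::finite set set" where
  "ext_idx i = {I. card I = i}"

definition ext_pow :: "nat \<Rightarrow> real^'d^'d \<Rightarrow> 'd::finite set \<Rightarrow> 'd set \<Rightarrow> real" where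
  "ext_pow i A = (\<lambda>I J. ldet i (\<lambda>r c. A $ (ilist I ! r) $ (ilist J ! c)))"

text \<open>Elements of GL(R) are represented by their restrictions to R.\<close>
definition GLs :: "(real^'n) set \<Rightarrow> (real^'n \<Rightarrow> real^'n) monoid" where
  "GLs R = \<lparr> carrier = {f. \<exists>g. linear g \<and> bij_betw g R R \<and> f = restrict g R},
             mult = (\<lambda>f g. restrict (f \<circ> g) R),
             one = restrict id R \<rparr>"

text \<open>Polynomial functions on End(R): the algebra generated by constants and the
  coordinate functionals f |-> (f v)_j, v in R.\<close>
inductive_set polyfun :: "(real^'n) set \<Rightarrow> ((real^'n \<Rightarrow> real^'n) \<Rightarrow> real) set"
  for R where
  const: "(\<lambda>f. c) \<in> polyfun R"
| coord: "v \<in> R \<Longrightarrow> (\<lambda>f. f v $ j) \<in> polyfun R"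
| add: "p \<in> polyfun R \<Longrightarrow> q \<in> polyfun R \<Longrightarrow> (\<lambda>f. p f + q f) \<in> polyfun R"
| mult: "p \<in> polyfun R \<Longrightarrow> q \<in> polyfun R \<Longrightarrow> (\<lambda>f. p f * q f) \<in> polyfun R"

definition zariski_dense_GL :: "(real^'n) set \<Rightarrow> (real^'n \<Rightarrow> real^'n) set \<Rightarrow> bool" where
  "zariski_dense_GL R G \<longleftrightarrow>
     (\<forall>p\<in>polyfun R. (\<forall>g\<in>G. p g = 0) \<longrightarrow> (\<forall>g\<in>carrier (GLs R). p g = 0))"

definition word :: "(nat \<Rightarrow> real^'n^'n) \<Rightarrow> nat \<Rightarrow> nat list \<Rightarrow> real^'n^'n" where
  "word A l ws = foldl (**) (A l) (map A ws)"

definition Rg :: "(nat \<Rightarrow> real^'n^'n) \<Rightarrow> nat \<Rightarrow> (real^'n) set" where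
  "Rg A l = range (\<lambda>x. A l *v x)"

definition Ggrp :: "nat \<Rightarrow> (nat \<Rightarrow> real^'n^'n) \<Rightarrow> nat \<Rightarrow> (real^'n \<Rightarrow> real^'n) set" where
  "Ggrp m A l = generate (GLs (Rg A l))
     {restrict (\<lambda>x. word A l ws *v x) (Rg A l) | ws. set ws \<subseteq> {1..m}}"

end

theory Submission
  imports Defs "HOL-Computational_Algebra.Polynomial"
begin


lemma ldet_cong:
  assumes "\<And>r c. r < n \<Longrightarrow> c < n \<Longrightarrow> M r c = M' r c"
  shows "ldet n M = ldet n M'"
  unfolding ldet_def
proof (rule sum.cong[OF refl])
  fix p assume "p \<in> {p. p permutes {..<n}}"
  hence p: "p permutes {..<n}" by simp
  show "of_int (sign p) * (\<Prod>r<n. M r (p r)) = of_int (sign p) * (\<Prod>r<n. M' r (p r))"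
    using assms permutes_in_image[OF p] by (auto intro!: prod.cong)
qed

lemma ldet_permute_rows:
  assumes p: "p permutes {..<n}"
  shows "ldet n (\<lambda>r c. M (p r) c) = of_int (sign p) * ldet n M"
proof -
  let ?P = "{q. q permutes {..<n}}"
  have "ldet n (\<lambda>r c. M (p r) c) = (\<Sum>q\<in>?P. of_int (sign (q \<circ> p)) * (\<Prod>r<n. M (p r) ((q \<circ> p) r)))"
    unfolding ldet_def by (rule sum_permutations_compose_right[OF p])
  also have "\<dots> = (\<Sum>q\<in>?P. of_int (sign p) * (of_int (sign q) * (\<Prod>r<n. M r (q r))))"
  proof (rule sum.cong[OF refl])
    fix q assume "q \<in> ?P" hence q: "q permutes {..<n}" by simp
    have "(\<Prod>r<n. M r (q r)) = (\<Prod>r\<in>p ` {..<n}. M r (q r))"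
      by (simp only: permutes_image[OF p])
    also have "\<dots> = (\<Prod>r<n. M (p r) ((q \<circ> p) r))"
      by (simp add: prod.reindex[OF permutes_inj_on[OF p]])
    finally have "(\<Prod>r<n. M (p r) ((q \<circ> p) r)) = (\<Prod>r<n. M r (q r))" by simp
    moreover have "sign (q \<circ> p) = sign q * sign p"
      using sign_compose permutation_permutes q p by (metis finite_lessThan)
    ultimately show "of_int (sign (q \<circ> p)) * (\<Prod>r<n. M (p r) ((q \<circ> p) r)) =
        of_int (sign p) * (of_int (sign q) * (\<Prod>r<n. M r (q r)))" by simp
  qed
  also have "\<dots> = of_int (sign p) * ldet n M" by (simp add: ldet_def sum_distrib_left)
  finally show ?thesis .
qed

lemma ldet_identical_rows:
  assumes "a < n" "b < n" "a \<noteq> b" "\<And>c. M a c = M b c"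
  shows "ldet n M = 0"
proof -
  let ?t = "Transposition.transpose a b"
  have t: "?t permutes {..<n}" using assms by (simp add: permutes_swap_id)
  have "(\<lambda>r c. M (?t r) c) = M"
    proof (intro ext)
    fix r c show "M (?t r) c = M r c"
      using assms(4) by (cases "r = a"; cases "r = b") auto
  qed
  hence "ldet n M = - ldet n M"
    using ldet_permute_rows[OF t, of M] assms(3) by (simp add: sign_swap_id)
  thus ?thesis by simp
qed

lemma ldet_noninj_rows:
  assumes "\<not> inj_on f {..<n}"
  shows "ldet n (\<lambda>r c. Q (f r) c) = 0"
proof -
  obtain a b where "a < n" "b < n" "a \<noteq> b" "f a = f b" using assms unfolding inj_on_def by auto
  thus ?thesis by (intro ldet_identical_rows[of a n b]) auto
qed

lemma ldet_expand:
  assumes T: "finite T"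
  shows "ldet n (\<lambda>r c. \<Sum>t\<in>T. P r t * Q t c)
     = (\<Sum>f\<in>PiE {..<n} (\<lambda>_. T). (\<Prod>r<n. P r (f r)) * ldet n (\<lambda>r c. Q (f r) c))"
proof -
  let ?P = "{p. p permutes {..<n}}"
  let ?F = "PiE {..<n} (\<lambda>_. T)"
  have "ldet n (\<lambda>r c. \<Sum>t\<in>T. P r t * Q t c)
      = (\<Sum>p\<in>?P. of_int (sign p) * (\<Sum>f\<in>?F. \<Prod>r<n. P r (f r) * Q (f r) (p r)))"
    unfolding ldet_def using T by (simp add: prod_sum_PiE)
  also have "\<dots> = (\<Sum>p\<in>?P. \<Sum>f\<in>?F. (\<Prod>r<n. P r (f r)) * (of_int (sign p) * (\<Prod>r<n. Q (f r) (p r))))"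
    by (simp add: sum_distrib_left prod.distrib algebra_simps)
  also have "\<dots> = (\<Sum>f\<in>?F. \<Sum>p\<in>?P. (\<Prod>r<n. P r (f r)) * (of_int (sign p) * (\<Prod>r<n. Q (f r) (p r))))"
    by (rule sum.swap)
  also have "\<dots> = (\<Sum>f\<in>?F. (\<Prod>r<n. P r (f r)) * ldet n (\<lambda>r c. Q (f r) c))"
    by (simp add: ldet_def sum_distrib_left)
  finally show ?thesis .
qed



lemma dord_bij: "bij_betw (dord :: 'd::finite \<Rightarrow> nat) UNIV {..<CARD('d)}"
proof -
  have "\<exists>f. bij_betw f (UNIV :: 'd set) {..<CARD('d)}"
    using ex_bij_betw_finite_nat[of "UNIV :: 'd set"] by (auto simp: atLeast0LessThan)
  thus ?thesis unfolding dord_def by (rule someI_ex)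
qed

lemma dord_inj: "inj (dord :: 'd::finite \<Rightarrow> nat)"
  using dord_bij bij_betw_imp_inj_on by blast

lemma ilist_props:
  fixes J :: "'d::finite set"
  shows "distinct (ilist J)" "set (ilist J) = J" "length (ilist J) = card J"
proof -
  have iv: "inv_into UNIV dord (dord x) = x" for x :: 'd using dord_inj by (rule inv_f_f)
  have fin: "finite (dord ` J)" by simp
  show "set (ilist J) = J" unfolding ilist_def using fin iv by (simp add: image_image)
  have "inj_on (inv_into UNIV (dord :: 'd \<Rightarrow> nat)) (dord ` J)"
    by (rule inj_on_inverseI[where g = dord]) (auto simp: f_inv_into_f)
  thus "distinct (ilist J)" unfolding ilist_def using fin by (simp add: distinct_map)
  show "length (ilist J) = card J" unfolding ilist_def
    using card_image[OF inj_on_subset[OF dord_inj]] by simp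
qed

lemma sum_inj_perm:
  assumes L: "distinct L" "length L = n"
  shows "(\<Sum>f\<in>{f\<in>PiE {..<n} (\<lambda>_. set L). inj_on f {..<n}}. F f)
       = (\<Sum>p\<in>{p. p permutes {..<n}}. F (restrict (\<lambda>r. L ! p r) {..<n}))"
proof -
  let ?i = "\<lambda>p. restrict (\<lambda>r. L ! p r) {..<n}"
  let ?P = "{p. p permutes {..<n}}"
  have inj: "inj_on ?i ?P"
  proof (rule inj_onI)
    fix p q assume p: "p \<in> ?P" and q: "q \<in> ?P" and e: "?i p = ?i q"
    show "p = q"
    proof
      fix r show "p r = q r"
      proof (cases "r < n")
        case True
        have "L ! p r = L ! q r" using e True by (metis restrict_apply' lessThan_iff)
        moreover have "p r < n" "q r < n" using p q True permutes_in_image by fastforce+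
        ultimately show ?thesis using L nth_eq_iff_index_eq by metis
      next
        case False thus ?thesis using p q permutes_not_in by (metis lessThan_iff mem_Collect_eq)
      qed
    qed
  qed
  have img: "?i ` ?P = {f\<in>PiE {..<n} (\<lambda>_. set L). inj_on f {..<n}}"
  proof
    show "?i ` ?P \<subseteq> {f\<in>PiE {..<n} (\<lambda>_. set L). inj_on f {..<n}}"
    proof (rule subsetI)
      fix g assume "g \<in> ?i ` ?P"
      then obtain p where p: "p permutes {..<n}" and g: "g = ?i p" by auto
      have lt: "r < n \<Longrightarrow> p r < n" for r using p permutes_in_image by fastforce
      have "?i p \<in> PiE {..<n} (\<lambda>_. set L)" using lt L by auto
      moreover have "inj_on (?i p) {..<n}"
      proof (rule inj_onI)
        fix r s assume "r \<in> {..<n}" "s \<in> {..<n}" "?i p r = ?i p s"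
        hence "L ! p r = L ! p s" "p r < n" "p s < n" using lt by auto
        hence "p r = p s" using L nth_eq_iff_index_eq by metis
        thus "r = s" using permutes_inj[OF p] by (simp add: inj_eq)
      qed
      ultimately show "g \<in> {f\<in>PiE {..<n} (\<lambda>_. set L). inj_on f {..<n}}" using g by simp
    qed
  next
    show "{f\<in>PiE {..<n} (\<lambda>_. set L). inj_on f {..<n}} \<subseteq> ?i ` ?P"
    proof clarify
      fix f assume f: "f \<in> PiE {..<n} (\<lambda>_. set L)" and fi: "inj_on f {..<n}"
      have ex: "\<exists>s<n. L ! s = f r" if "r < n" for r
        using f that L by (auto simp: in_set_conv_nth)
      define p where "p = (\<lambda>r. if r < n then (SOME s. s < n \<and> L ! s = f r) else r)"
      have p1: "r < n \<Longrightarrow> p r < n \<and> L ! p r = f r" for r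
        unfolding p_def using someI_ex[OF ex] by auto
      have pinj: "inj_on p {..<n}"
      proof (rule inj_onI)
        fix r s assume "r \<in> {..<n}" "s \<in> {..<n}" "p r = p s"
        hence "f r = f s" using p1 by (metis lessThan_iff)
        thus "r = s" using fi \<open>r \<in> {..<n}\<close> \<open>s \<in> {..<n}\<close> by (simp add: inj_on_eq_iff)
      qed
      have "p ` {..<n} \<subseteq> {..<n}" using p1 by auto
      hence "p ` {..<n} = {..<n}" using pinj by (simp add: endo_inj_surj)
      hence bij: "bij_betw p {..<n} {..<n}" using pinj by (simp add: bij_betw_def)
      have perm: "p permutes {..<n}"
        by (rule bij_imp_permutes[OF bij]) (simp add: p_def)
      have "f = ?i p"
      proof
        fix r show "f r = ?i p r"
          using f p1 by (cases "r < n") (auto simp: PiE_def extensional_def)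
      qed
      thus "f \<in> ?i ` ?P" using perm by blast
    qed
  qed
  show ?thesis using sum.reindex[OF inj, of F] img by (simp add: o_def)
qed

lemma ldet_mult_sq:
  "ldet n (\<lambda>r c. \<Sum>s<n. P r s * Q s c) = ldet n P * ldet n Q"
proof -
  let ?F = "PiE {..<n} (\<lambda>_. {..<n::nat})"
  let ?G = "\<lambda>f. (\<Prod>r<n. P r (f r)) * ldet n (\<lambda>r c. Q (f r) c)"
  have "ldet n (\<lambda>r c. \<Sum>s<n. P r s * Q s c) = (\<Sum>f\<in>?F. ?G f)"
    by (rule ldet_expand) simp
  also have "\<dots> = (\<Sum>f\<in>{f\<in>?F. inj_on f {..<n}}. ?G f)"
    by (rule sum.mono_neutral_right) (auto simp: ldet_noninj_rows intro: finite_PiE)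
  also have "\<dots> = (\<Sum>f\<in>{f\<in>PiE {..<n} (\<lambda>_. set [0..<n]). inj_on f {..<n}}. ?G f)"
    by (simp add: atLeast0LessThan)
  also have "\<dots> = (\<Sum>p\<in>{p. p permutes {..<n}}. ?G (restrict (\<lambda>r. [0..<n] ! p r) {..<n}))"
    by (rule sum_inj_perm) auto
  also have "\<dots> = (\<Sum>p\<in>{p. p permutes {..<n}}. (of_int (sign p) * (\<Prod>r<n. P r (p r))) * ldet n Q)"
  proof (rule sum.cong[OF refl])
    fix p assume "p \<in> {p. p permutes {..<n}}"
    hence p: "p permutes {..<n}" by simp
    have lt: "r < n \<Longrightarrow> p r < n" for r using p permutes_in_image by fastforce
    have "(\<Prod>r<n. P r (restrict (\<lambda>r. [0..<n] ! p r) {..<n} r)) = (\<Prod>r<n. P r (p r))"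
      using lt by (auto intro!: prod.cong)
    moreover have "ldet n (\<lambda>r c. Q (restrict (\<lambda>r. [0..<n] ! p r) {..<n} r) c) = ldet n (\<lambda>r c. Q (p r) c)"
      using lt by (intro ldet_cong) auto
    ultimately show "?G (restrict (\<lambda>r. [0..<n] ! p r) {..<n}) = (of_int (sign p) * (\<Prod>r<n. P r (p r))) * ldet n Q"
      using ldet_permute_rows[OF p, of Q] by simp
  qed
  also have "\<dots> = ldet n P * ldet n Q"
    by (simp add: ldet_def sum_distrib_right)
  finally show ?thesis .
qed



lemma cauchy_binet:
  fixes P :: "nat \<Rightarrow> 'd::finite \<Rightarrow> real" and Q :: "'d \<Rightarrow> nat \<Rightarrow> real"
  shows "ldet n (\<lambda>r c. \<Sum>t\<in>UNIV. P r t * Q t c)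
    = (\<Sum>J\<in>{J::'d set. card J = n}. ldet n (\<lambda>r c. P r (ilist J ! c)) * ldet n (\<lambda>r c. Q (ilist J ! r) c))"
proof -
  let ?G = "\<lambda>f. (\<Prod>r<n. P r (f r)) * ldet n (\<lambda>r c. Q (f r) c)"
  let ?F = "PiE {..<n} (\<lambda>_. UNIV :: 'd set)"
  let ?A = "\<lambda>J::'d set. {f\<in>PiE {..<n} (\<lambda>_. set (ilist J)). inj_on f {..<n}}"
  have fin: "finite ?F" by (intro finite_PiE) auto
  have "ldet n (\<lambda>r c. \<Sum>t\<in>UNIV. P r t * Q t c) = (\<Sum>f\<in>?F. ?G f)"
    by (rule ldet_expand) simp
  also have "\<dots> = (\<Sum>f\<in>{f\<in>?F. inj_on f {..<n}}. ?G f)"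
    by (rule sum.mono_neutral_right) (auto simp: ldet_noninj_rows fin)
  also have "{f\<in>?F. inj_on f {..<n}} = \<Union> (?A ` {J. card J = n})"
  proof
    show "{f\<in>?F. inj_on f {..<n}} \<subseteq> \<Union> (?A ` {J. card J = n})"
    proof (rule subsetI)
      fix f assume f: "f \<in> {f\<in>?F. inj_on f {..<n}}"
      let ?J = "f ` {..<n}"
      have c: "card ?J = n" using f card_image by fastforce
      have "f \<in> ?A ?J" using f by (auto simp: ilist_props PiE_def)
      thus "f \<in> \<Union> (?A ` {J. card J = n})" using c by blast
    qed
  next
    show "\<Union> (?A ` {J. card J = n}) \<subseteq> {f\<in>?F. inj_on f {..<n}}" by (auto simp: PiE_def)
  qed
  also have "(\<Sum>f\<in>\<Union> (?A ` {J. card J = n}). ?G f) = (\<Sum>J\<in>{J. card J = n}. \<Sum>f\<in>?A J. ?G f)"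
  proof (rule sum.UNION_disjoint)
    show "finite {J::'d set. card J = n}" by simp
    show "\<forall>J\<in>{J. card J = n}. finite (?A J)" by (intro ballI finite_subset[OF _ finite_PiE[of "{..<n}" "\<lambda>_. set (ilist J)" for J]]) auto
    show "\<forall>J1\<in>{J. card J = n}. \<forall>J2\<in>{J. card J = n}. J1 \<noteq> J2 \<longrightarrow> ?A J1 \<inter> ?A J2 = {}"
    proof (intro ballI impI)
      fix J1 J2 :: "'d set" assume J: "J1 \<in> {J. card J = n}" "J2 \<in> {J. card J = n}" "J1 \<noteq> J2"
      show "?A J1 \<inter> ?A J2 = {}"
      proof (rule ccontr)
        assume "?A J1 \<inter> ?A J2 \<noteq> {}"
        then obtain f where f1: "f \<in> ?A J1" and f2: "f \<in> ?A J2" by blast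
        have cf: "card (f ` {..<n}) = n" using f1 card_image by fastforce
        have "f ` {..<n} \<subseteq> J1" "f ` {..<n} \<subseteq> J2" using f1 f2 by (auto simp: ilist_props)
        hence "f ` {..<n} = J1" "f ` {..<n} = J2"
          using J cf by (metis card_subset_eq finite mem_Collect_eq)+
        thus False using J(3) by simp
      qed
    qed
  qed
  also have "\<dots> = (\<Sum>J\<in>{J. card J = n}. ldet n (\<lambda>r c. P r (ilist J ! c)) * ldet n (\<lambda>r c. Q (ilist J ! r) c))"
  proof (rule sum.cong[OF refl])
    fix J :: "'d set" assume "J \<in> {J. card J = n}"
    hence L: "distinct (ilist J)" "length (ilist J) = n" by (auto simp: ilist_props)
    let ?L = "ilist J"
    have "(\<Sum>f\<in>?A J. ?G f) = (\<Sum>p\<in>{p. p permutes {..<n}}. ?G (restrict (\<lambda>r. ?L ! p r) {..<n}))"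
      by (rule sum_inj_perm[OF L])
    also have "\<dots> = (\<Sum>p\<in>{p. p permutes {..<n}}. (of_int (sign p) * (\<Prod>r<n. P r (?L ! p r))) * ldet n (\<lambda>r c. Q (?L ! r) c))"
    proof (rule sum.cong[OF refl])
      fix p assume "p \<in> {p. p permutes {..<n}}"
      hence p: "p permutes {..<n}" by simp
      have "(\<Prod>r<n. P r (restrict (\<lambda>r. ?L ! p r) {..<n} r)) = (\<Prod>r<n. P r (?L ! p r))"
        by (auto intro!: prod.cong)
      moreover have "ldet n (\<lambda>r c. Q (restrict (\<lambda>r. ?L ! p r) {..<n} r) c) = ldet n (\<lambda>r c. Q (?L ! p r) c)"
        by (intro ldet_cong) auto
      moreover have "ldet n (\<lambda>r c. Q (?L ! p r) c) = of_int (sign p) * ldet n (\<lambda>r c. Q (?L ! r) c)"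
        using ldet_permute_rows[OF p, of "\<lambda>r c. Q (?L ! r) c"] by simp
      ultimately show "?G (restrict (\<lambda>r. ?L ! p r) {..<n}) = (of_int (sign p) * (\<Prod>r<n. P r (?L ! p r))) * ldet n (\<lambda>r c. Q (?L ! r) c)"
        by simp
    qed
    also have "\<dots> = ldet n (\<lambda>r c. P r (?L ! c)) * ldet n (\<lambda>r c. Q (?L ! r) c)"
      by (simp add: ldet_def sum_distrib_right)
    finally show "(\<Sum>f\<in>?A J. ?G f) = ldet n (\<lambda>r c. P r (?L ! c)) * ldet n (\<lambda>r c. Q (?L ! r) c)" .
  qed
  finally show ?thesis .
qed



definition om :: "nat \<Rightarrow> (nat \<Rightarrow> real^'d) \<Rightarrow> 'd::finite set \<Rightarrow> real" where
  "om i x = (\<lambda>I. if card I = i then ldet i (\<lambda>r c. x c $ (ilist I ! r)) else 0)"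

definition Tm :: "nat \<Rightarrow> real^'d^'d \<Rightarrow> ('d::finite set \<Rightarrow> real) \<Rightarrow> ('d set \<Rightarrow> real)" where
  "Tm i M = mv (ext_idx i) (ext_pow i M)"

lemma Tm_om: "Tm i M (om i x) = om i (\<lambda>c. M *v x c)"
proof (rule ext)
  fix I
  show "Tm i M (om i x) I = om i (\<lambda>c. M *v x c) I"
  proof (cases "card I = i")
    case True
    have "Tm i M (om i x) I = (\<Sum>J\<in>{J. card J = i}. ldet i (\<lambda>r c. M $ (ilist I ! r) $ (ilist J ! c)) * ldet i (\<lambda>r c. x c $ (ilist J ! r)))"
      using True unfolding Tm_def mv_def ext_idx_def ext_pow_def om_def
      by (auto intro!: sum.cong)
    also have "\<dots> = ldet i (\<lambda>r c. \<Sum>t\<in>UNIV. M $ (ilist I ! r) $ t * x c $ t)"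
      by (rule cauchy_binet[symmetric])
    also have "\<dots> = om i (\<lambda>c. M *v x c) I"
      using True unfolding om_def by (simp add: matrix_vector_mult_def)
    finally show ?thesis .
  next
    case False thus ?thesis unfolding Tm_def mv_def ext_idx_def om_def by simp
  qed
qed

lemma Tm_direct: "Tm i M u = (\<lambda>I. \<Sum>J\<in>ext_idx i. u J * om i (\<lambda>c. M *v axis (ilist J ! c) 1) I)"
proof (rule ext)
  fix I
  show "Tm i M u I = (\<Sum>J\<in>ext_idx i. u J * om i (\<lambda>c. M *v axis (ilist J ! c) 1) I)"
  proof (cases "card I = i")
    case True thus ?thesis unfolding Tm_def mv_def ext_idx_def ext_pow_def om_def
      by (auto intro!: sum.cong simp: matrix_vector_mult_basis column_def)
  next
    case False thus ?thesis unfolding Tm_def mv_def ext_idx_def om_def by simp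
  qed
qed

lemma Tm_lin:
  assumes "finite F"
  shows "Tm i M (\<lambda>I. \<Sum>J\<in>F. a J * w J I) = (\<lambda>I. \<Sum>J\<in>F. a J * Tm i M (w J) I)"
proof (rule ext)
  fix I
  show "Tm i M (\<lambda>I. \<Sum>J\<in>F. a J * w J I) I = (\<Sum>J\<in>F. a J * Tm i M (w J) I)"
    unfolding Tm_def mv_def
    by (auto simp: sum_distrib_left algebra_simps intro: sum.swap)
qed

lemma Tm_inE:
  "Tm i M (\<lambda>I. \<Sum>J\<in>ext_idx i. a J * om i (X J) I) = (\<lambda>I. \<Sum>J\<in>ext_idx i. a J * om i (\<lambda>c. M *v X J c) I)"
  by (simp add: Tm_lin ext_idx_def Tm_om)

lemma Tm_mult: "Tm i (X ** Y) u = Tm i X (Tm i Y u)"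
  by (simp add: Tm_direct[of i Y] Tm_inE Tm_direct[of i "X ** Y"] matrix_vector_mul_assoc)

definition inE :: "nat \<Rightarrow> (real^'d) set \<Rightarrow> ('d::finite set \<Rightarrow> real) \<Rightarrow> bool" where
  "inE i R v \<longleftrightarrow> (\<exists>(a :: 'd set \<Rightarrow> real) (X :: 'd set \<Rightarrow> nat \<Rightarrow> real^'d). (\<forall>J c. X J c \<in> R) \<and> v = (\<lambda>I. \<Sum>J\<in>ext_idx i. a J * om i (X J) I))"

lemma mrange_inE:
  assumes "v \<in> mrange (ext_idx i) (ext_pow i M)"
  shows "inE i (range (\<lambda>x. M *v x)) v"
proof -
  obtain u where "v = Tm i M u" using assms unfolding mrange_def Tm_def by auto
  thus ?thesis unfolding inE_def Tm_direct
    by (intro exI[of _ u] exI[of _ "\<lambda>J c. M *v axis (ilist J ! c) 1"]) auto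
qed



lemma inj_from_dim:
  fixes f :: "real^'n \<Rightarrow> real^'m"
  assumes lf: "linear f" and S: "subspace S" and d: "dim (f ` S) = dim S"
  shows "inj_on f S"
proof -
  obtain B where B: "B \<subseteq> S" "independent B" "S \<subseteq> span B" "card B = dim S"
    using basis_exists by blast
  have fB: "finite B" using B(2) finiteI_independent by blast
  have sp: "f ` S \<subseteq> span (f ` B)"
    using B(3) lf by (metis image_mono linear_span_image)
  have "dim (f ` S) \<le> card (f ` B)"
    using span_card_ge_dim[OF _ sp] B(1) fB by auto
  moreover have "card (f ` B) \<le> card B" using card_image_le fB by blast
  ultimately have c: "card (f ` B) = card B" using B(4) d by linarith
  have "independent (f ` B)"
    using card_le_dim_spanning[OF _ sp] B(1) fB c B(4) d by auto
  then have "inj_on f (span B)"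
    using linear_inj_on_span_iff_independent_image[OF lf] c fB eq_card_imp_inj_on
    by metis
  moreover have "span B = S" using B S by (simp add: span_subspace)
  ultimately show ?thesis by simp
qed

lemma lin_inj_onto:
  fixes f :: "real^'n \<Rightarrow> real^'n"
  assumes lf: "linear f" and S: "subspace S" and sub: "f ` S \<subseteq> S" and inj: "inj_on f S"
  shows "f ` S = S"
proof -
  have sS: "span S = S" using S by (simp add: span_eq_iff)
  have "dim (f ` S) = dim S" using dim_image_eq[OF lf, of S] inj unfolding sS by simp
  moreover have "subspace (f ` S)" using lf S by (rule linear_subspace_image)
  ultimately show ?thesis using subspace_dim_equal[OF _ S sub] by simp
qed

lemma subspace_Rg: "subspace (Rg A l)"
  unfolding Rg_def by (rule linear_subspace_image[OF matrix_vector_mul_linear subspace_UNIV])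

lemma img_R:
  assumes rk: "\<forall>j\<in>{1..m}. rank (A j) = k"
    and rk2: "\<forall>a\<in>{1..m}. \<forall>b\<in>{1..m}. rank (A a ** A b) = k"
    and a: "a \<in> {1..m}" and b: "b \<in> {1..m}"
  shows "(\<lambda>x. A a *v x) ` Rg A b = Rg A a \<and> inj_on (\<lambda>x. A a *v x) (Rg A b)"
proof -
  have e: "(\<lambda>x. A a *v x) ` Rg A b = range (\<lambda>x. (A a ** A b) *v x)"
    unfolding Rg_def by (auto simp: image_image matrix_vector_mul_assoc)
  have d1: "dim ((\<lambda>x. A a *v x) ` Rg A b) = k" using e rk2 a b rank_dim_range by metis
  have d2: "dim (Rg A a) = k" "dim (Rg A b) = k" using rk a b rank_dim_range unfolding Rg_def by metis+
  have sub: "(\<lambda>x. A a *v x) ` Rg A b \<subseteq> Rg A a" unfolding Rg_def by auto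
  have "subspace ((\<lambda>x. A a *v x) ` Rg A b)"
    using subspace_Rg matrix_vector_mul_linear linear_subspace_image by blast
  hence "(\<lambda>x. A a *v x) ` Rg A b = Rg A a"
    using subspace_dim_equal[OF _ subspace_Rg sub] d1 d2 by simp
  moreover have "inj_on (\<lambda>x. A a *v x) (Rg A b)"
    by (rule inj_from_dim[OF matrix_vector_mul_linear subspace_Rg]) (simp add: d1 d2)
  ultimately show ?thesis by simp
qed

lemma foldl_mult_assoc: "foldl (**) (X ** Y) zs = X ** foldl (**) Y zs"
proof (induction zs arbitrary: Y)
  case Nil thus ?case by simp
next
  case (Cons a zs) thus ?case by (metis foldl_Cons matrix_mul_assoc)
qed

lemma word_Nil: "word A l [] = A l" by (simp add: word_def)
lemma word_snoc: "word A l (ws @ [a]) = word A l ws ** A a" by (simp add: word_def)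
lemma word_Cons: "word A l (a # ws) = A l ** word A a ws" by (simp add: word_def foldl_mult_assoc)

lemma word_img:
  assumes rk: "\<forall>j\<in>{1..m}. rank (A j) = k"
    and rk2: "\<forall>a\<in>{1..m}. \<forall>b\<in>{1..m}. rank (A a ** A b) = k"
    and l: "l \<in> {1..m}" and b: "b \<in> {1..m}" and ws: "set ws \<subseteq> {1..m}"
  shows "(\<lambda>x. word A l ws *v x) ` Rg A b = Rg A l \<and> inj_on (\<lambda>x. word A l ws *v x) (Rg A b)"
  using ws b
proof (induction ws arbitrary: b rule: rev_induct)
  case Nil thus ?case using img_R[OF rk rk2 l] by (simp add: word_Nil)
next
  case (snoc a ws)
  have a: "a \<in> {1..m}" using snoc by auto
  have IH: "(\<lambda>x. word A l ws *v x) ` Rg A a = Rg A l \<and> inj_on (\<lambda>x. word A l ws *v x) (Rg A a)"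
    using snoc a by auto
  have R: "(\<lambda>x. A a *v x) ` Rg A b = Rg A a \<and> inj_on (\<lambda>x. A a *v x) (Rg A b)"
    using img_R[OF rk rk2 a snoc(3)] .
  have f: "(\<lambda>x. word A l (ws @ [a]) *v x) = (\<lambda>x. word A l ws *v x) \<circ> (\<lambda>x. A a *v x)"
    by (auto simp: word_snoc matrix_vector_mul_assoc)
  show ?case unfolding f using IH R
    by (metis comp_inj_on image_comp)
qed

lemma part1:
  assumes rk: "\<forall>j\<in>{1..m}. rank (A j) = k"
    and rk2: "\<forall>a\<in>{1..m}. \<forall>b\<in>{1..m}. rank (A a ** A b) = k"
  shows "\<forall>l\<in>{1..m}. \<forall>ws. set ws \<subseteq> {1..m} \<longrightarrow>
            linear (\<lambda>x. word A l ws *v x) \<and> bij_betw (\<lambda>x. word A l ws *v x) (Rg A l) (Rg A l)"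
  using word_img[OF rk rk2] by (auto simp: bij_betw_def matrix_vector_mul_linear)



lemma lin_left_inv:
  fixes g :: "real^'n \<Rightarrow> real^'m"
  assumes "linear g" "subspace R" "inj_on g R"
  shows "\<exists>\<psi>. linear \<psi> \<and> (\<forall>x\<in>R. \<psi> (g x) = x)"
proof -
  have sR: "span R = R" using assms(2) by (simp add: span_eq_iff)
  show ?thesis using linear_inj_on_left_inverse[OF assms(1), of R] assms(3) unfolding sR by auto
qed

lemma GLs_carrier_iff:
  "f \<in> carrier (GLs R) \<longleftrightarrow> (\<exists>g. linear g \<and> bij_betw g R R \<and> f = restrict g R)"
  by (simp add: GLs_def)

lemma GLs_mult: "x \<otimes>\<^bsub>GLs R\<^esub> y = restrict (x \<circ> y) R" by (simp add: GLs_def)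
lemma GLs_one: "\<one>\<^bsub>GLs R\<^esub> = restrict id R" by (simp add: GLs_def)

lemma GLs_mem_R: "f \<in> carrier (GLs R) \<Longrightarrow> x \<in> R \<Longrightarrow> f x \<in> R"
  by (auto simp: GLs_carrier_iff bij_betw_def)

lemma GLs_out: "f \<in> carrier (GLs R) \<Longrightarrow> x \<notin> R \<Longrightarrow> f x = undefined"
  by (auto simp: GLs_carrier_iff)

lemma GLs_eqI: "f \<in> carrier (GLs R) \<Longrightarrow> g \<in> carrier (GLs R) \<Longrightarrow> (\<And>x. x \<in> R \<Longrightarrow> f x = g x) \<Longrightarrow> f = g"
  by (rule ext) (metis GLs_out)

lemma GLs_group:
  fixes R :: "(real^'n) set"
  assumes R: "subspace R"
  shows "group (GLs R)"
proof (rule groupI)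
  fix x y assume x: "x \<in> carrier (GLs R)" and y: "y \<in> carrier (GLs R)"
  obtain g where g: "linear g" "bij_betw g R R" "x = restrict g R" using x by (auto simp: GLs_carrier_iff)
  obtain h where h: "linear h" "bij_betw h R R" "y = restrict h R" using y by (auto simp: GLs_carrier_iff)
  have "x \<otimes>\<^bsub>GLs R\<^esub> y = restrict (g \<circ> h) R"
    using g h by (auto simp: GLs_mult bij_betw_def fun_eq_iff)
  moreover have "linear (g \<circ> h)" using g h linear_compose by blast
  moreover have "bij_betw (g \<circ> h) R R" using g h bij_betw_trans by blast
  ultimately show "x \<otimes>\<^bsub>GLs R\<^esub> y \<in> carrier (GLs R)" by (auto simp: GLs_carrier_iff)
next
  show "\<one>\<^bsub>GLs R\<^esub> \<in> carrier (GLs R)" unfolding GLs_one GLs_carrier_iff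
    by (intro exI[of _ id]) (auto simp: linear_id)
next
  fix x y z assume x: "x \<in> carrier (GLs R)" and y: "y \<in> carrier (GLs R)" and z: "z \<in> carrier (GLs R)"
  show "x \<otimes>\<^bsub>GLs R\<^esub> y \<otimes>\<^bsub>GLs R\<^esub> z = x \<otimes>\<^bsub>GLs R\<^esub> (y \<otimes>\<^bsub>GLs R\<^esub> z)"
    using GLs_mem_R[OF z] by (auto simp: GLs_mult fun_eq_iff)
next
  fix x assume x: "x \<in> carrier (GLs R)"
  show "\<one>\<^bsub>GLs R\<^esub> \<otimes>\<^bsub>GLs R\<^esub> x = x"
    using GLs_mem_R[OF x] GLs_out[OF x] by (auto simp: GLs_mult GLs_one fun_eq_iff)
next
  fix x assume x: "x \<in> carrier (GLs R)"
  obtain g where g: "linear g" "bij_betw g R R" "x = restrict g R" using x by (auto simp: GLs_carrier_iff)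
  have gi: "inj_on g R" and gR: "g ` R = R" using g(2) by (simp_all add: bij_betw_def)
  obtain \<psi> where psi: "linear \<psi>" "\<forall>x\<in>R. \<psi> (g x) = x"
    using lin_left_inv[OF g(1) R gi] by blast
  have "bij_betw \<psi> R R"
  proof -
    have "\<psi> ` R = R"
    proof -
      have "\<psi> ` R = \<psi> ` (g ` R)" using gR by simp
      also have "\<dots> = (\<lambda>x. \<psi> (g x)) ` R" by (simp add: image_image)
      also have "\<dots> = R" using psi(2) by simp
      finally show ?thesis .
    qed
    moreover have "inj_on \<psi> R"
    proof (rule inj_onI)
      fix a b assume "a \<in> R" "b \<in> R" "\<psi> a = \<psi> b"
      have "a \<in> g ` R" "b \<in> g ` R" using gR \<open>a \<in> R\<close> \<open>b \<in> R\<close> by simp_all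
      then obtain a' b' where "a' \<in> R" "b' \<in> R" "a = g a'" "b = g b'" by (auto simp only: image_iff)
      thus "a = b" using \<open>\<psi> a = \<psi> b\<close> psi by auto
    qed
    ultimately show ?thesis by (simp add: bij_betw_def)
  qed
  hence "restrict \<psi> R \<in> carrier (GLs R)" using psi(1) by (auto simp: GLs_carrier_iff)
  moreover have "restrict \<psi> R \<otimes>\<^bsub>GLs R\<^esub> x = \<one>\<^bsub>GLs R\<^esub>"
    using g psi gR by (auto simp: GLs_mult GLs_one fun_eq_iff)
  ultimately show "\<exists>y\<in>carrier (GLs R). y \<otimes>\<^bsub>GLs R\<^esub> x = \<one>\<^bsub>GLs R\<^esub>" by blast
qed

definition conjm :: "(real^'n \<Rightarrow> real^'n) \<Rightarrow> (real^'n) set \<Rightarrow> (real^'n) set \<Rightarrow> (real^'n \<Rightarrow> real^'n) \<Rightarrow> (real^'n \<Rightarrow> real^'n)" where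
  "conjm \<phi> Ri Rj g = restrict (\<phi> \<circ> g \<circ> inv_into Ri \<phi>) Rj"

lemma conj_hom:
  fixes \<phi> :: "real^'n \<Rightarrow> real^'n"
  assumes Ri: "subspace Ri" and Rj: "subspace Rj" and lf: "linear \<phi>" and bij: "bij_betw \<phi> Ri Rj"
  shows "group_hom (GLs Ri) (GLs Rj) (conjm \<phi> Ri Rj)"
proof -
  have inj: "inj_on \<phi> Ri" and im: "\<phi> ` Ri = Rj" using bij by (simp_all add: bij_betw_def)
  have ii: "y \<in> Rj \<Longrightarrow> inv_into Ri \<phi> y \<in> Ri" for y using im by (metis inv_into_into)
  have fi: "y \<in> Rj \<Longrightarrow> \<phi> (inv_into Ri \<phi> y) = y" for y using im by (metis f_inv_into_f)
  have if': "x \<in> Ri \<Longrightarrow> inv_into Ri \<phi> (\<phi> x) = x" for x using inj by (simp add: inv_into_f_f)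
  obtain \<psi> where psi: "linear \<psi>" "\<forall>x\<in>Ri. \<psi> (\<phi> x) = x" using lin_left_inv[OF lf Ri inj] by blast
  have psi2: "y \<in> Rj \<Longrightarrow> \<psi> y = inv_into Ri \<phi> y" for y using psi fi ii by metis
  have bpsi: "bij_betw \<psi> Rj Ri"
  proof (rule bij_betw_imageI)
    show "inj_on \<psi> Rj"
    proof (rule inj_onI)
      fix a b assume "a \<in> Rj" "b \<in> Rj" "\<psi> a = \<psi> b"
      thus "a = b" using psi2 fi by metis
    qed
    show "\<psi> ` Rj = Ri"
    proof
      show "\<psi> ` Rj \<subseteq> Ri" using psi2 ii by auto
      show "Ri \<subseteq> \<psi> ` Rj"
      proof
        fix x assume "x \<in> Ri"
        hence "\<phi> x \<in> Rj" "\<psi> (\<phi> x) = x" using im psi by auto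
        thus "x \<in> \<psi> ` Rj" by (metis image_eqI)
      qed
    qed
  qed
  show ?thesis
    unfolding group_hom_def group_hom_axioms_def
  proof (intro conjI)
    show "group (GLs Ri)" "group (GLs Rj)" using GLs_group Ri Rj by auto
    show "conjm \<phi> Ri Rj \<in> hom (GLs Ri) (GLs Rj)"
    proof (rule homI)
      fix x assume x: "x \<in> carrier (GLs Ri)"
      obtain g where g: "linear g" "bij_betw g Ri Ri" "x = restrict g Ri" using x by (auto simp: GLs_carrier_iff)
      have "conjm \<phi> Ri Rj x = restrict (\<phi> \<circ> g \<circ> \<psi>) Rj"
        using g ii psi2 by (auto simp: conjm_def fun_eq_iff)
      moreover have "linear (\<phi> \<circ> g \<circ> \<psi>)" using lf g psi linear_compose by blast
      moreover have "bij_betw (\<phi> \<circ> g \<circ> \<psi>) Rj Rj" using bij g(2) bpsi bij_betw_trans by blast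
      ultimately show "conjm \<phi> Ri Rj x \<in> carrier (GLs Rj)" by (auto simp: GLs_carrier_iff)
    next
      fix x y assume x: "x \<in> carrier (GLs Ri)" and y: "y \<in> carrier (GLs Ri)"
      show "conjm \<phi> Ri Rj (x \<otimes>\<^bsub>GLs Ri\<^esub> y) = conjm \<phi> Ri Rj x \<otimes>\<^bsub>GLs Rj\<^esub> conjm \<phi> Ri Rj y"
        using ii if' GLs_mem_R[OF y] im by (auto simp: conjm_def GLs_mult fun_eq_iff)
    qed
  qed
qed



lemma gen_carrier:
  assumes rk: "\<forall>j\<in>{1..m}. rank (A j) = k"
    and rk2: "\<forall>a\<in>{1..m}. \<forall>b\<in>{1..m}. rank (A a ** A b) = k"
    and l: "l \<in> {1..m}" and ws: "set ws \<subseteq> {1..m}"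
  shows "restrict (\<lambda>x. word A l ws *v x) (Rg A l) \<in> carrier (GLs (Rg A l))"
proof -
  have "bij_betw (\<lambda>x. word A l ws *v x) (Rg A l) (Rg A l)" using part1[OF rk rk2] l ws by blast
  thus ?thesis unfolding GLs_carrier_iff
    by (intro exI[of _ "\<lambda>x. word A l ws *v x"]) (simp add: matrix_vector_mul_linear)
qed

lemma part_a:
  assumes rk: "\<forall>j\<in>{1..m}. rank (A j) = k"
    and rk2: "\<forall>a\<in>{1..m}. \<forall>b\<in>{1..m}. rank (A a ** A b) = k"
    and i: "i \<in> {1..m}" and j: "j \<in> {1..m}"
  shows "\<exists>\<phi>. linear \<phi> \<and> bij_betw \<phi> (Rg A i) (Rg A j) \<and>
            Ggrp m A j = (\<lambda>g. restrict (\<phi> \<circ> g \<circ> inv_into (Rg A i) \<phi>) (Rg A j)) ` Ggrp m A i"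
proof -
  let ?Ri = "Rg A i" and ?Rj = "Rg A j"
  let ?\<phi> = "\<lambda>x. A j *v x"
  let ?c = "conjm ?\<phi> ?Ri ?Rj"
  let ?gen = "\<lambda>l ws. restrict (\<lambda>x. word A l ws *v x) (Rg A l)"
  let ?Si = "{?gen i ws | ws. set ws \<subseteq> {1..m}}"
  let ?Sj = "{?gen j ws | ws. set ws \<subseteq> {1..m}}"
  have lf: "linear ?\<phi>" by (rule matrix_vector_mul_linear)
  have ij: "?\<phi> ` ?Ri = ?Rj" "inj_on ?\<phi> ?Ri" using img_R[OF rk rk2 j i] by auto
  hence bij: "bij_betw ?\<phi> ?Ri ?Rj" by (simp add: bij_betw_def)
  interpret H: group_hom "GLs ?Ri" "GLs ?Rj" ?c
    by (rule conj_hom[OF subspace_Rg subspace_Rg lf bij])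
  have ii: "y \<in> ?Rj \<Longrightarrow> inv_into ?Ri ?\<phi> y \<in> ?Ri" for y using ij by (metis inv_into_into)
  have fi: "y \<in> ?Rj \<Longrightarrow> ?\<phi> (inv_into ?Ri ?\<phi> y) = y" for y using ij by (metis f_inv_into_f)
  have if': "x \<in> ?Ri \<Longrightarrow> inv_into ?Ri ?\<phi> (?\<phi> x) = x" for x using ij by (simp add: inv_into_f_f)
  have inRi: "A i *v x \<in> ?Ri" for x by (simp add: Rg_def)
  have Sic: "?Si \<subseteq> carrier (GLs ?Ri)" using gen_carrier[OF rk rk2 i] by auto
  have Sjc: "?Sj \<subseteq> carrier (GLs ?Rj)" using gen_carrier[OF rk rk2 j] by auto
  have cSic: "?c ` ?Si \<subseteq> carrier (GLs ?Rj)" using Sic H.hom_closed by blast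
  have cval: "?c g y = ?\<phi> (g (inv_into ?Ri ?\<phi> y))" if "y \<in> ?Rj" for g y
    using that by (simp add: conjm_def)
  have gval: "?gen l ws y = word A l ws *v y" if "y \<in> Rg A l" for l ws y using that by simp
  have c1: "?c ` ?Si \<subseteq> generate (GLs ?Rj) ?Sj"
  proof
    fix g assume "g \<in> ?c ` ?Si"
    then obtain ws where ws: "set ws \<subseteq> {1..m}" and g: "g = ?c (?gen i ws)" by blast
    let ?s1 = "?gen j (i # ws @ [i])" and ?s2 = "?gen j [i]"
    have s1: "?s1 \<in> carrier (GLs ?Rj)" and s2: "?s2 \<in> carrier (GLs ?Rj)"
      using gen_carrier[OF rk rk2 j] ws i by auto
    have cs: "?c (?gen i ws) \<in> carrier (GLs ?Rj)" using gen_carrier[OF rk rk2 i ws] H.hom_closed by blast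
    have eq: "?s1 = ?c (?gen i ws) \<otimes>\<^bsub>GLs ?Rj\<^esub> ?s2"
    proof (rule GLs_eqI[OF s1 H.H.m_closed[OF cs s2]])
      fix y assume y: "y \<in> ?Rj"
      have s2y: "?s2 y = ?\<phi> (A i *v y)" using y by (simp add: word_def matrix_vector_mul_assoc)
      have s2R: "?s2 y \<in> ?Rj" using GLs_mem_R[OF s2 y] .
      have "(?c (?gen i ws) \<otimes>\<^bsub>GLs ?Rj\<^esub> ?s2) y = ?c (?gen i ws) (?s2 y)"
        using y by (simp add: GLs_mult)
      also have "\<dots> = ?\<phi> (?gen i ws (inv_into ?Ri ?\<phi> (?s2 y)))" using cval[OF s2R] .
      also have "inv_into ?Ri ?\<phi> (?s2 y) = A i *v y" using s2y if'[OF inRi] by simp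
      also have "?\<phi> (?gen i ws (A i *v y)) = A j *v (word A i ws *v (A i *v y))"
        using inRi by simp
      also have "\<dots> = ?s1 y" using y
        by (simp add: word_Cons word_snoc matrix_vector_mul_assoc)
      finally show "?s1 y = (?c (?gen i ws) \<otimes>\<^bsub>GLs ?Rj\<^esub> ?s2) y" by (rule sym)
    qed
    have geq: "g = ?s1 \<otimes>\<^bsub>GLs ?Rj\<^esub> inv\<^bsub>GLs ?Rj\<^esub> ?s2"
      using H.H.inv_solve_right[OF cs s1 s2] eq g by simp
    have m1: "?s1 \<in> generate (GLs ?Rj) ?Sj"
      using ws i by (intro generate.incl CollectI exI[of _ "i # ws @ [i]"]) auto
    have m2: "?s2 \<in> generate (GLs ?Rj) ?Sj"
      using ws i by (intro generate.incl CollectI exI[of _ "[i]"]) auto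
    have sg: "subgroup (generate (GLs ?Rj) ?Sj) (GLs ?Rj)" using H.H.generate_is_subgroup[OF Sjc] .
    show "g \<in> generate (GLs ?Rj) ?Sj"
      unfolding geq by (rule subgroup.m_closed[OF sg m1 subgroup.m_inv_closed[OF sg m2]])
  qed
  have c2: "?Sj \<subseteq> generate (GLs ?Rj) (?c ` ?Si)"
  proof
    fix t assume "t \<in> ?Sj"
    then obtain ws where ws: "set ws \<subseteq> {1..m}" and t: "t = ?gen j ws" by blast
    let ?u = "?gen i [j]" and ?s = "?gen i (j # ws @ [j])"
    have u: "?u \<in> carrier (GLs ?Ri)" and s: "?s \<in> carrier (GLs ?Ri)"
      using gen_carrier[OF rk rk2 i] ws j by auto
    have tc: "t \<in> carrier (GLs ?Rj)" using gen_carrier[OF rk rk2 j ws] t by simp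
    have cu: "?c ?u \<in> carrier (GLs ?Rj)" and cs: "?c ?s \<in> carrier (GLs ?Rj)"
      using u s H.hom_closed by blast+
    have eq: "?c ?s = ?c ?u \<otimes>\<^bsub>GLs ?Rj\<^esub> t"
    proof (rule GLs_eqI[OF cs H.H.m_closed[OF cu tc]])
      fix y assume y: "y \<in> ?Rj"
      have ty: "t y \<in> ?Rj" using GLs_mem_R[OF tc y] .
      have "(?c ?u \<otimes>\<^bsub>GLs ?Rj\<^esub> t) y = ?c ?u (t y)" using y by (simp add: GLs_mult)
      also have "\<dots> = ?\<phi> (?u (inv_into ?Ri ?\<phi> (t y)))" using cval[OF ty] .
      also have "\<dots> = A j *v (A i *v (?\<phi> (inv_into ?Ri ?\<phi> (t y))))"
        using ii[OF ty] by (simp add: word_def matrix_vector_mul_assoc)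
      also have "\<dots> = A j *v (A i *v (word A j ws *v y))" using fi[OF ty] t y by simp
      finally have l: "(?c ?u \<otimes>\<^bsub>GLs ?Rj\<^esub> t) y = A j *v (A i *v (word A j ws *v y))" .
      have "?c ?s y = ?\<phi> (?s (inv_into ?Ri ?\<phi> y))" using cval[OF y] .
      also have "\<dots> = A j *v (A i *v (word A j ws *v (?\<phi> (inv_into ?Ri ?\<phi> y))))"
        using ii[OF y] by (simp add: word_Cons word_snoc matrix_vector_mul_assoc)
      also have "\<dots> = A j *v (A i *v (word A j ws *v y))" using fi[OF y] by simp
      finally show "?c ?s y = (?c ?u \<otimes>\<^bsub>GLs ?Rj\<^esub> t) y" using l by simp
    qed
    have teq: "t = inv\<^bsub>GLs ?Rj\<^esub> (?c ?u) \<otimes>\<^bsub>GLs ?Rj\<^esub> ?c ?s"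
      using H.H.inv_solve_left[OF tc cu cs] eq by simp
    have "?u \<in> ?Si" using j by (intro CollectI exI[of _ "[j]"]) auto
    hence m1: "?c ?u \<in> generate (GLs ?Rj) (?c ` ?Si)" by (intro generate.incl imageI)
    have "?s \<in> ?Si" using ws j by (intro CollectI exI[of _ "j # ws @ [j]"]) auto
    hence m2: "?c ?s \<in> generate (GLs ?Rj) (?c ` ?Si)" by (intro generate.incl imageI)
    have sg: "subgroup (generate (GLs ?Rj) (?c ` ?Si)) (GLs ?Rj)" using H.H.generate_is_subgroup[OF cSic] .
    show "t \<in> generate (GLs ?Rj) (?c ` ?Si)"
      unfolding teq by (rule subgroup.m_closed[OF sg subgroup.m_inv_closed[OF sg m1] m2])
  qed
  have "generate (GLs ?Rj) ?Sj = generate (GLs ?Rj) (?c ` ?Si)"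
  proof
    show "generate (GLs ?Rj) ?Sj \<subseteq> generate (GLs ?Rj) (?c ` ?Si)"
      by (rule H.H.generate_subgroup_incl[OF c2 H.H.generate_is_subgroup[OF cSic]])
    show "generate (GLs ?Rj) (?c ` ?Si) \<subseteq> generate (GLs ?Rj) ?Sj"
      by (rule H.H.generate_subgroup_incl[OF c1 H.H.generate_is_subgroup[OF Sjc]])
  qed
  also have "\<dots> = ?c ` generate (GLs ?Ri) ?Si" by (rule H.generate_img[OF Sic])
  finally have "Ggrp m A j = ?c ` Ggrp m A i" unfolding Ggrp_def by simp
  moreover have "?c = (\<lambda>g. restrict (?\<phi> \<circ> g \<circ> inv_into ?Ri ?\<phi>) ?Rj)"
    by (simp add: conjm_def fun_eq_iff)
  ultimately show ?thesis using lf bij by metis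
qed



lemma pf_sum:
  assumes "finite F" "\<And>x. x \<in> F \<Longrightarrow> (\<lambda>g. f x g) \<in> polyfun R"
  shows "(\<lambda>g. \<Sum>x\<in>F. f x g) \<in> polyfun R"
  using assms
proof (induction F rule: finite_induct)
  case empty thus ?case using polyfun.const[of 0 R] by simp
next
  case (insert a F) thus ?case using polyfun.add[of "\<lambda>g. f a g" R "\<lambda>g. \<Sum>x\<in>F. f x g"] by simp
qed

lemma pf_prod:
  assumes "finite F" "\<And>x. x \<in> F \<Longrightarrow> (\<lambda>g. f x g) \<in> polyfun R"
  shows "(\<lambda>g. \<Prod>x\<in>F. f x g) \<in> polyfun R"
  using assms
proof (induction F rule: finite_induct)
  case empty thus ?case using polyfun.const[of 1 R] by simp
next
  case (insert a F) thus ?case using polyfun.mult[of "\<lambda>g. f a g" R "\<lambda>g. \<Prod>x\<in>F. f x g"] by simp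
qed

lemma pf_cmult: "p \<in> polyfun R \<Longrightarrow> (\<lambda>g. c * p g) \<in> polyfun R"
  using polyfun.mult[OF polyfun.const[of c R]] by simp

lemma pf_ldet:
  assumes "\<And>r c. (\<lambda>g. M g r c) \<in> polyfun R"
  shows "(\<lambda>g. ldet n (M g)) \<in> polyfun R"
  unfolding ldet_def
  by (intro pf_sum pf_cmult pf_prod assms) (auto simp: finite_permutations)

lemma poly_param:
  assumes "p \<in> polyfun R"
  shows "\<exists>q. \<forall>t. p (restrict (\<lambda>x. h x + t *\<^sub>R x) R) = poly q t"
  using assms
proof (induction rule: polyfun.induct)
  case (const c) thus ?case by (intro exI[of _ "[:c:]"]) simp
next
  case (coord v j) thus ?case by (intro exI[of _ "[:h v $ j, v $ j:]"]) (simp add: algebra_simps)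
next
  case (add p q)
  then obtain a b where a: "\<And>t. p (restrict (\<lambda>x. h x + t *\<^sub>R x) R) = poly a t"
    and b: "\<And>t. q (restrict (\<lambda>x. h x + t *\<^sub>R x) R) = poly b t" by blast
  show ?case by (intro exI[of _ "a + b"] allI) (simp only: a b poly_add)
next
  case (mult p q)
  then obtain a b where a: "\<And>t. p (restrict (\<lambda>x. h x + t *\<^sub>R x) R) = poly a t"
    and b: "\<And>t. q (restrict (\<lambda>x. h x + t *\<^sub>R x) R) = poly b t" by blast
  show ?case by (intro exI[of _ "a * b"] allI) (simp only: a b poly_mult)
qed

lemma poly_end:
  fixes R :: "(real^'n) set" and h :: "real^'n \<Rightarrow> real^'n"
  assumes R: "subspace R" and p: "p \<in> polyfun R"
    and van: "\<forall>g\<in>carrier (GLs R). p g = 0"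
    and h: "linear h" and hR: "h ` R \<subseteq> R"
  shows "p (restrict h R) = 0"
proof -
  obtain q where q: "\<And>t. p (restrict (\<lambda>x. h x + t *\<^sub>R x) R) = poly q t"
    using poly_param[OF p, of h] by blast
  obtain B where B: "B > 0" "\<And>x. norm (h x) \<le> B * norm x" using linear_bounded_pos[OF h] by blast
  have root: "poly q t = 0" if t: "t > B" for t
  proof -
    let ?g = "\<lambda>x. h x + t *\<^sub>R x"
    have lg: "linear ?g" using h unfolding linear_iff by (simp add: algebra_simps scaleR_add_right)
    have z: "x = 0" if "?g x = 0" for x
    proof -
      have "h x = - (t *\<^sub>R x)" using that by (simp add: eq_neg_iff_add_eq_0)
      hence "t * norm x \<le> B * norm x" using B(2)[of x] t B(1) by simp
      hence "(t - B) * norm x \<le> 0" by (simp add: algebra_simps)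
      moreover have "t - B > 0" using t by simp
      ultimately have "norm x \<le> 0" by (simp add: mult_le_0_iff)
      thus ?thesis by simp
    qed
    have inj: "inj_on ?g R"
    proof (rule inj_onI)
      fix x y assume "x \<in> R" "y \<in> R" "?g x = ?g y"
      hence "?g (x - y) = 0" using linear_diff[OF lg] by simp
      thus "x = y" using z[of "x - y"] by simp
    qed
    have sub: "?g ` R \<subseteq> R" using hR R by (auto intro!: subspace_add subspace_scale)
    have "?g ` R = R" by (rule lin_inj_onto[OF lg R sub inj])
    hence "restrict ?g R \<in> carrier (GLs R)" using lg inj by (auto simp: GLs_carrier_iff bij_betw_def)
    hence "p (restrict ?g R) = 0" using van by blast
    thus ?thesis using q[of t] by simp
  qed
  have "q = 0"
  proof (rule ccontr)
    assume "q \<noteq> 0"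
    hence "finite {t. poly q t = 0}" by (rule poly_roots_finite)
    moreover have "{B<..} \<subseteq> {t. poly q t = 0}" using root by auto
    ultimately show False using infinite_Ioi finite_subset by blast
  qed
  hence "p (restrict (\<lambda>x. h x + 0 *\<^sub>R x) R) = 0" using q[of 0] by simp
  moreover have "restrict (\<lambda>x. h x + 0 *\<^sub>R x) R = restrict h R" by simp
  ultimately show ?thesis by simp
qed



lemma orth_mem:
  fixes V :: "('e::finite \<Rightarrow> real) set"
  assumes fs: "fsubspace S V" and y: "y \<in> fvecs S"
    and H: "\<And>w. (\<forall>v\<in>V. (\<Sum>I\<in>S. w I * v I) = 0) \<Longrightarrow> (\<Sum>I\<in>S. w I * y I) = 0"
  shows "y \<in> V"
proof -
  let ?tv = "\<lambda>v::'e \<Rightarrow> real. (\<chi> I. v I) :: real^'e"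
  let ?W = "?tv ` V"
  have V: "V \<subseteq> fvecs S" "(\<lambda>_. 0) \<in> V" "\<And>u w. u \<in> V \<Longrightarrow> w \<in> V \<Longrightarrow> (\<lambda>x. u x + w x) \<in> V"
    "\<And>c u. u \<in> V \<Longrightarrow> (\<lambda>x. c * u x) \<in> V"
    using fs unfolding fsubspace_def by auto
  have sW: "subspace ?W"
    unfolding subspace_def
  proof (intro conjI ballI allI)
    show "0 \<in> ?W" using V(2) by (intro image_eqI[of _ _ "\<lambda>_. 0"]) (auto simp: vec_eq_iff)
  next
    fix a b assume "a \<in> ?W" "b \<in> ?W"
    then obtain u w where "u \<in> V" "w \<in> V" "a = ?tv u" "b = ?tv w" by blast
    thus "a + b \<in> ?W" using V(3) by (intro image_eqI[of _ _ "\<lambda>x. u x + w x"]) (auto simp: vec_eq_iff)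
  next
    fix c :: real and a assume "a \<in> ?W"
    then obtain u where "u \<in> V" "a = ?tv u" by blast
    thus "c *\<^sub>R a \<in> ?W" using V(4) by (intro image_eqI[of _ _ "\<lambda>x. c * u x"]) (auto simp: vec_eq_iff)
  qed
  obtain p z where p: "p \<in> span ?W" and z: "\<And>w. w \<in> span ?W \<Longrightarrow> orthogonal z w" and yz: "?tv y = p + z"
    using orthogonal_subspace_decomp_exists[of ?W "?tv y"] by blast
  have spW: "span ?W = ?W" using sW by (simp only: span_eq_iff)
  have pW: "p \<in> ?W" using p unfolding spW .
  have sumS: "(\<Sum>I\<in>S. f I) = (\<Sum>I\<in>UNIV. f I)" if "\<And>I. I \<notin> S \<Longrightarrow> f I = 0" for f :: "'e \<Rightarrow> real"
    by (rule sum.mono_neutral_left) (auto simp: that)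
  have "\<forall>v\<in>V. (\<Sum>I\<in>S. z $ I * v I) = 0"
  proof
    fix v assume v: "v \<in> V"
    have "v \<in> fvecs S" using v V(1) by auto
    hence "(\<Sum>I\<in>S. z $ I * v I) = z \<bullet> ?tv v" using sumS[of "\<lambda>I. z $ I * v I"]
      by (simp add: fvecs_def inner_vec_def)
    also have "\<dots> = 0" using z[of "?tv v"] v by (auto simp: orthogonal_def span_base)
    finally show "(\<Sum>I\<in>S. z $ I * v I) = 0" .
  qed
  hence "(\<Sum>I\<in>S. z $ I * y I) = 0" by (rule H)
  hence "z \<bullet> ?tv y = 0" using sumS[of "\<lambda>I. z $ I * y I"] y by (simp add: fvecs_def inner_vec_def)
  hence "z \<bullet> p + z \<bullet> z = 0" using yz by (simp add: inner_add_right)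
  moreover have "z \<bullet> p = 0" using z[OF p] by (simp add: orthogonal_def)
  ultimately have "z = 0" by simp
  hence "?tv y \<in> ?W" using yz pW by simp
  then obtain v where v: "v \<in> V" "?tv v = ?tv y" by auto
  hence "v = y" by (auto simp: vec_eq_iff fun_eq_iff)
  thus ?thesis using v by simp
qed

lemma fsub_zero: "fsubspace S V \<Longrightarrow> (\<lambda>_. 0) \<in> V"
  unfolding fsubspace_def by blast
lemma fsub_add: "fsubspace S V \<Longrightarrow> u \<in> V \<Longrightarrow> w \<in> V \<Longrightarrow> (\<lambda>x. u x + w x) \<in> V"
  unfolding fsubspace_def by blast
lemma fsub_scale: "fsubspace S V \<Longrightarrow> u \<in> V \<Longrightarrow> (\<lambda>x. c * u x) \<in> V"
  unfolding fsubspace_def by blast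

lemma fsub_sum:
  assumes fs: "fsubspace S V" and F: "finite F" and f: "\<And>J. J \<in> F \<Longrightarrow> f J \<in> V"
  shows "(\<lambda>I. \<Sum>J\<in>F. a J * f J I) \<in> V"
  using F f
proof (induction F rule: finite_induct)
  case empty thus ?case using fsub_zero[OF fs] by simp
next
  case (insert J F)
  have "(\<lambda>x. a J * f J x) \<in> V" using fsub_scale[OF fs, of "f J"] insert by simp
  moreover have "(\<lambda>I. \<Sum>J\<in>F. a J * f J I) \<in> V" using insert by simp
  ultimately have "(\<lambda>x. a J * f J x + (\<Sum>J\<in>F. a J * f J x)) \<in> V"
    using fsub_add[OF fs] by blast
  moreover have "(\<lambda>I. \<Sum>J\<in>insert J F. a J * f J I) = (\<lambda>x. a J * f J x + (\<Sum>J\<in>F. a J * f J x))"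
    using insert(1,2) by (simp add: fun_eq_iff)
  ultimately show ?case by simp
qed

lemma om_rank1:
  fixes x X :: "nat \<Rightarrow> real^'d::finite" and I0 :: "'d set"
  assumes I0: "card I0 = i"
  shows "om i (\<lambda>c. \<Sum>s<i. (X c $ (ilist I0 ! s)) *\<^sub>R x s) = (\<lambda>I. om i x I * om i X I0)"
proof (rule ext)
  fix I :: "'d set"
  show "om i (\<lambda>c. \<Sum>s<i. (X c $ (ilist I0 ! s)) *\<^sub>R x s) I = om i x I * om i X I0"
  proof (cases "card I = i")
    case True
    have "om i (\<lambda>c. \<Sum>s<i. (X c $ (ilist I0 ! s)) *\<^sub>R x s) I
        = ldet i (\<lambda>r c. \<Sum>s<i. x s $ (ilist I ! r) * X c $ (ilist I0 ! s))"
      using True unfolding om_def by (simp add: mult.commute)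
    also have "\<dots> = ldet i (\<lambda>r s. x s $ (ilist I ! r)) * ldet i (\<lambda>s c. X c $ (ilist I0 ! s))"
      by (rule ldet_mult_sq)
    finally show ?thesis using True I0 by (simp add: om_def)
  next
    case False thus ?thesis by (simp add: om_def)
  qed
qed



lemma carrier_GLsE:
  assumes "g \<in> carrier (GLs R)"
  obtains h where "linear h" "bij_betw h R R" "g = restrict h R"
  using assms by (auto simp: GLs_carrier_iff)

lemma Tm_word:
  assumes V2: "\<forall>a\<in>{1..m}. \<forall>b\<in>{1..m}. Tm i (A a) ` V b = V a"
    and l: "l \<in> {1..m}" and ws: "set ws \<subseteq> {1..m}" and b: "b \<in> {1..m}"
  shows "Tm i (word A l ws) ` V b = V l"
  using ws b
proof (induction ws arbitrary: b rule: rev_induct)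
  case Nil thus ?case using V2 l by (simp add: word_Nil)
next
  case (snoc a ws)
  have a: "a \<in> {1..m}" using snoc by auto
  have "Tm i (word A l (ws @ [a])) ` V b = Tm i (word A l ws) ` (Tm i (A a) ` V b)"
    by (simp add: word_snoc Tm_mult image_image)
  also have "Tm i (A a) ` V b = V a" using V2 a snoc by blast
  also have "Tm i (word A l ws) ` V a = V l" using snoc a by auto
  finally show ?case .
qed

lemma part_b:
  fixes A :: "nat \<Rightarrow> real^'d^'d"
  assumes rk: "\<forall>j\<in>{1..m}. rank (A j) = k"
    and rk2: "\<forall>a\<in>{1..m}. \<forall>b\<in>{1..m}. rank (A a ** A b) = k"
    and l: "l \<in> {1..m}" and dense: "zariski_dense_GL (Rg A l) (Ggrp m A l)"
  shows "irreducible_tuple (ext_idx i) m (\<lambda>j. ext_pow i (A j))"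
  unfolding irreducible_tuple_def
proof
  let ?R = "Rg A l" and ?S = "ext_idx i :: 'd set set"
  assume "reducible_tuple ?S m (\<lambda>j. ext_pow i (A j))"
  then obtain V where V1: "\<forall>j\<in>{1..m}. fsubspace ?S (V j) \<and> V j \<noteq> {\<lambda>_. 0} \<and> V j \<subset> mrange ?S (ext_pow i (A j))"
    and V2': "\<forall>a\<in>{1..m}. \<forall>b\<in>{1..m}. mv ?S (ext_pow i (A a)) ` V b = V a"
    unfolding reducible_tuple_def by blast
  have V2: "\<forall>a\<in>{1..m}. \<forall>b\<in>{1..m}. Tm i (A a) ` V b = V a" using V2' by (simp add: Tm_def)
  let ?V0 = "V l"
  have fs: "fsubspace ?S ?V0" and nz: "?V0 \<noteq> {\<lambda>_. 0}" and ss: "?V0 \<subset> mrange ?S (ext_pow i (A l))"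
    using V1 l by auto
  have R: "subspace ?R" by (rule subspace_Rg)
  have Rl: "(\<lambda>x. A l *v x) ` ?R = ?R" "inj_on (\<lambda>x. A l *v x) ?R" using img_R[OF rk rk2 l l] by auto
  obtain \<psi> where psi: "linear \<psi>" "\<forall>x\<in>?R. \<psi> (A l *v x) = x"
    using lin_left_inv[OF matrix_vector_mul_linear R Rl(2)] by blast
  define P where "P = (\<lambda>y. \<psi> (A l *v y))"
  have P1: "P y \<in> ?R" for y
  proof -
    have "A l *v y \<in> ?R" by (simp add: Rg_def)
    then obtain x where "x \<in> ?R" "A l *v y = A l *v x" using Rl(1) by (metis imageE)
    thus ?thesis using psi unfolding P_def by simp
  qed
  have P2: "y \<in> ?R \<Longrightarrow> P y = y" for y using psi unfolding P_def by simp
  have lP: "linear P" unfolding P_def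
    using linear_compose[OF matrix_vector_mul_linear psi(1)] by (simp add: o_def)
  define hat where "hat = (\<lambda>g. (\<chi> r c. g (P (axis c 1)) $ r) :: real^'d^'d)"
  have hat_ap: "hat (restrict h ?R) *v x = h x" if h: "linear h" and x: "x \<in> ?R" for h x
  proof -
    have "hat (restrict h ?R) = matrix (h \<circ> P)" using P1 by (simp add: hat_def matrix_def)
    moreover have "linear (h \<circ> P)" using h lP linear_compose by blast
    ultimately have "hat (restrict h ?R) *v x = (h \<circ> P) x" by (metis matrix_vector_mul(2))
    thus ?thesis using P2[OF x] by simp
  qed
  define T where "T = (\<lambda>g. Tm i (hat g))"
  have T_inE: "T (restrict h ?R) (\<lambda>I. \<Sum>J\<in>?S. a J * om i (X J) I) = (\<lambda>I. \<Sum>J\<in>?S. a J * om i (\<lambda>c. h (X J c)) I)"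
    if h: "linear h" and X: "\<forall>J c. X J c \<in> ?R" for h a X
    unfolding T_def Tm_inE using hat_ap[OF h] X by simp
  have V0E: "\<exists>a X. (\<forall>J c. X J c \<in> ?R) \<and> v = (\<lambda>I. \<Sum>J\<in>?S. a J * om i (X J) I)" if "v \<in> ?V0" for v
  proof -
    have "v \<in> mrange ?S (ext_pow i (A l))" using that ss by blast
    from mrange_inE[OF this] show ?thesis unfolding inE_def Rg_def by blast
  qed
  have T_mult: "T (g1 \<otimes>\<^bsub>GLs ?R\<^esub> g2) v = T g1 (T g2 v)"
    if g1: "g1 \<in> carrier (GLs ?R)" and g2: "g2 \<in> carrier (GLs ?R)" and v: "v \<in> ?V0" for g1 g2 v
  proof -
    obtain h1 where h1: "linear h1" "bij_betw h1 ?R ?R" "g1 = restrict h1 ?R" using g1 by (rule carrier_GLsE)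
    obtain h2 where h2: "linear h2" "bij_betw h2 ?R ?R" "g2 = restrict h2 ?R" using g2 by (rule carrier_GLsE)
    have h2R: "x \<in> ?R \<Longrightarrow> h2 x \<in> ?R" for x using h2(2) by (auto simp: bij_betw_def)
    obtain a X where X: "\<forall>J c. X J c \<in> ?R" and ve: "v = (\<lambda>I. \<Sum>J\<in>?S. a J * om i (X J) I)"
      using V0E[OF v] by blast
    have m: "g1 \<otimes>\<^bsub>GLs ?R\<^esub> g2 = restrict (h1 \<circ> h2) ?R"
      using h1 h2 h2R by (auto simp: GLs_mult fun_eq_iff)
    have l12: "linear (h1 \<circ> h2)" using h1 h2 linear_compose by blast
    have X2: "\<forall>J c. h2 (X J c) \<in> ?R" using X h2R by blast
    have e1: "T (g1 \<otimes>\<^bsub>GLs ?R\<^esub> g2) v = (\<lambda>I. \<Sum>J\<in>?S. a J * om i (\<lambda>c. (h1 \<circ> h2) (X J c)) I)"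
      unfolding m ve by (rule T_inE[OF l12 X])
    have e2: "T g2 v = (\<lambda>I. \<Sum>J\<in>?S. a J * om i (\<lambda>c. h2 (X J c)) I)"
      unfolding h2(3) ve by (rule T_inE[OF h2(1) X])
    have e3: "T g1 (\<lambda>I. \<Sum>J\<in>?S. a J * om i (\<lambda>c. h2 (X J c)) I) = (\<lambda>I. \<Sum>J\<in>?S. a J * om i (\<lambda>c. h1 (h2 (X J c))) I)"
      unfolding h1(3) using T_inE[OF h1(1), of "\<lambda>J c. h2 (X J c)" a] X2 by simp
    show ?thesis using e1 e2 e3 by (simp add: o_def)
  qed
  have T_one: "T (\<one>\<^bsub>GLs ?R\<^esub>) v = v" if v: "v \<in> ?V0" for v
  proof -
    obtain a X where X: "\<forall>J c. X J c \<in> ?R" and ve: "v = (\<lambda>I. \<Sum>J\<in>?S. a J * om i (X J) I)"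
      using V0E[OF v] by blast
    have "\<one>\<^bsub>GLs ?R\<^esub> = restrict (\<lambda>x. x) ?R" by (simp add: GLs_one id_def)
    thus ?thesis unfolding ve using T_inE[OF linear_id[unfolded id_def] X] by simp
  qed
  have T_gen: "T (restrict (\<lambda>x. word A l ws *v x) ?R) v = Tm i (word A l ws) v" if v: "v \<in> ?V0" for ws v
  proof -
    obtain a X where X: "\<forall>J c. X J c \<in> ?R" and ve: "v = (\<lambda>I. \<Sum>J\<in>?S. a J * om i (X J) I)"
      using V0E[OF v] by blast
    show ?thesis unfolding ve T_inE[OF matrix_vector_mul_linear X] Tm_inE ..
  qed
  interpret G: group "GLs ?R" by (rule GLs_group[OF R])
  have Ginv: "g \<in> carrier (GLs ?R) \<and> T g ` ?V0 = ?V0" if "g \<in> Ggrp m A l" for g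
    using that unfolding Ggrp_def
  proof (induction rule: generate.induct)
    case one
    have "T (\<one>\<^bsub>GLs ?R\<^esub>) ` ?V0 = ?V0" using T_one by simp
    thus ?case by simp
  next
    case (incl h)
    then obtain ws where ws: "set ws \<subseteq> {1..m}" and h: "h = restrict (\<lambda>x. word A l ws *v x) ?R" by blast
    have "h \<in> carrier (GLs ?R)" using gen_carrier[OF rk rk2 l ws] h by simp
    moreover have "T h ` ?V0 = Tm i (word A l ws) ` ?V0" using T_gen h by simp
    moreover have "Tm i (word A l ws) ` ?V0 = ?V0" using Tm_word[OF V2 l ws l] .
    ultimately show ?case by simp
  next
    case (inv h)
    then obtain ws where ws: "set ws \<subseteq> {1..m}" and h: "h = restrict (\<lambda>x. word A l ws *v x) ?R" by blast
    have hc: "h \<in> carrier (GLs ?R)" using gen_carrier[OF rk rk2 l ws] h by simp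
    have hV: "T h ` ?V0 = ?V0" using T_gen h Tm_word[OF V2 l ws l] by simp
    have ic: "inv\<^bsub>GLs ?R\<^esub> h \<in> carrier (GLs ?R)" using hc by simp
    have "T (inv\<^bsub>GLs ?R\<^esub> h) ` ?V0 = T (inv\<^bsub>GLs ?R\<^esub> h) ` (T h ` ?V0)" using hV by simp
    also have "\<dots> = (\<lambda>v. T (inv\<^bsub>GLs ?R\<^esub> h) (T h v)) ` ?V0" by (simp add: image_image)
    also have "\<dots> = (\<lambda>v. v) ` ?V0"
    proof (rule image_cong[OF refl])
      fix v assume v: "v \<in> ?V0"
      have "T (inv\<^bsub>GLs ?R\<^esub> h) (T h v) = T (inv\<^bsub>GLs ?R\<^esub> h \<otimes>\<^bsub>GLs ?R\<^esub> h) v" using T_mult[OF ic hc v] by simp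
      also have "\<dots> = v" using T_one[OF v] hc by simp
      finally show "T (inv\<^bsub>GLs ?R\<^esub> h) (T h v) = v" .
    qed
    finally show ?case using ic by simp
  next
    case (eng h1 h2)
    have c: "h1 \<in> carrier (GLs ?R)" "h2 \<in> carrier (GLs ?R)" using eng by auto
    have "T (h1 \<otimes>\<^bsub>GLs ?R\<^esub> h2) ` ?V0 = (\<lambda>v. T h1 (T h2 v)) ` ?V0"
      using T_mult[OF c] by (intro image_cong) auto
    also have "\<dots> = T h1 ` (T h2 ` ?V0)" by (simp add: image_image)
    also have "\<dots> = ?V0" using eng by simp
    finally show ?case using c by simp
  qed
  have Tfv: "T g v \<in> fvecs ?S" for g v by (simp add: T_def Tm_def mv_def fvecs_def)
  have inv_end: "T (restrict h ?R) v \<in> ?V0" if h: "linear h" "h ` ?R \<subseteq> ?R" and v: "v \<in> ?V0" for h v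
  proof (rule orth_mem[OF fs Tfv])
    fix w assume w: "\<forall>v\<in>?V0. (\<Sum>I\<in>?S. w I * v I) = 0"
    define pfn where "pfn = (\<lambda>g. \<Sum>I\<in>?S. w I * (\<Sum>J\<in>?S. v J * ldet i (\<lambda>r c. g (P (axis (ilist J ! c) 1)) $ (ilist I ! r))))"
    have pfn_eq: "pfn g = (\<Sum>I\<in>?S. w I * T g v I)" for g
      unfolding pfn_def T_def Tm_def mv_def ext_pow_def hat_def
      by (intro sum.cong refl) (auto intro!: sum.cong simp: mult.commute)
    have pfn_poly: "pfn \<in> polyfun ?R"
      unfolding pfn_def
      by (intro pf_sum pf_cmult pf_ldet polyfun.coord P1) (simp_all add: ext_idx_def)
    have "\<forall>g\<in>Ggrp m A l. pfn g = 0"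
    proof
      fix g assume "g \<in> Ggrp m A l"
      hence "T g v \<in> ?V0" using Ginv v by blast
      thus "pfn g = 0" using w pfn_eq by simp
    qed
    hence "\<forall>g\<in>carrier (GLs ?R). pfn g = 0" using dense pfn_poly unfolding zariski_dense_GL_def by blast
    hence "pfn (restrict h ?R) = 0" using poly_end[OF R pfn_poly _ h] by blast
    thus "(\<Sum>I\<in>?S. w I * T (restrict h ?R) v I) = 0" using pfn_eq by simp
  qed
  have z0: "(\<lambda>_. 0) \<in> ?V0" using fs by (simp add: fsubspace_def)
  obtain v0 where v0: "v0 \<in> ?V0" "v0 \<noteq> (\<lambda>_. 0)" using nz z0 by blast
  then obtain I0 where I0: "v0 I0 \<noteq> 0" by (meson ext)
  have cI0: "card I0 = i"
  proof (rule ccontr)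
    assume "card I0 \<noteq> i"
    hence "I0 \<notin> ?S" by (simp add: ext_idx_def)
    moreover have "v0 \<in> fvecs ?S" using v0 fs by (auto simp: fsubspace_def)
    ultimately show False using I0 by (simp add: fvecs_def)
  qed
  obtain a0 X0 where X0: "\<forall>J c. X0 J c \<in> ?R" and v0e: "v0 = (\<lambda>I. \<Sum>J\<in>?S. a0 J * om i (X0 J) I)"
    using V0E[OF v0(1)] by blast
  have omV: "om i x \<in> ?V0" if x: "\<forall>c. x c \<in> ?R" for x
  proof -
    define h where "h = (\<lambda>y::real^'d. \<Sum>s<i. (y $ (ilist I0 ! s)) *\<^sub>R x s)"
    have lh: "linear h" unfolding h_def linear_iff
      by (simp add: scaleR_add_left sum.distrib scaleR_sum_right)
    have hR: "h ` ?R \<subseteq> ?R" unfolding h_def using x R by (auto intro!: subspace_sum subspace_scale)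
    have "T (restrict h ?R) v0 = (\<lambda>I. \<Sum>J\<in>?S. a0 J * om i (\<lambda>c. h (X0 J c)) I)"
      unfolding v0e using T_inE[OF lh X0] .
    also have "\<dots> = (\<lambda>I. om i x I * v0 I0)"
      unfolding h_def om_rank1[OF cI0] v0e by (simp add: sum_distrib_left algebra_simps)
    finally have "(\<lambda>I. (1 / v0 I0) * T (restrict h ?R) v0 I) = om i x" using I0 by simp
    moreover have "(\<lambda>I. (1 / v0 I0) * T (restrict h ?R) v0 I) \<in> ?V0"
      using inv_end[OF lh hR v0(1)] fs unfolding fsubspace_def by blast
    ultimately show ?thesis by simp
  qed
  have "mrange ?S (ext_pow i (A l)) \<subseteq> ?V0"
  proof
    fix u assume "u \<in> mrange ?S (ext_pow i (A l))"
    from mrange_inE[OF this] obtain a X where X: "\<forall>J c. X J c \<in> ?R"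
      and ue: "u = (\<lambda>I. \<Sum>J\<in>?S. a J * om i (X J) I)" unfolding inE_def Rg_def by blast
    have omX: "\<And>J. om i (X J) \<in> ?V0" using X omV by blast
    show "u \<in> ?V0" unfolding ue by (rule fsub_sum[OF fs _ omX]) (simp add: ext_idx_def)
  qed
  thus False using ss by blast
qed

theorem proposition2p10:
  fixes A :: "nat \<Rightarrow> real^'d^'d" and m k :: nat
  assumes "1 \<le> k" and "k \<le> CARD('d)"
    and rk: "\<forall>j\<in>{1..m}. rank (A j) = k"
    and rk2: "\<forall>a\<in>{1..m}. \<forall>b\<in>{1..m}. rank (A a ** A b) = k"
  shows "(\<forall>l\<in>{1..m}. \<forall>ws. set ws \<subseteq> {1..m} \<longrightarrow>
            linear (\<lambda>x. word A l ws *v x) \<and> bij_betw (\<lambda>x. word A l ws *v x) (Rg A l) (Rg A l))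
    \<and> (\<forall>i\<in>{1..m}. \<forall>j\<in>{1..m}. \<exists>\<phi>. linear \<phi> \<and> bij_betw \<phi> (Rg A i) (Rg A j) \<and>
            Ggrp m A j = (\<lambda>g. restrict (\<phi> \<circ> g \<circ> inv_into (Rg A i) \<phi>) (Rg A j)) ` Ggrp m A i)
    \<and> ((\<exists>l\<in>{1..m}. zariski_dense_GL (Rg A l) (Ggrp m A l)) \<longrightarrow>
         (\<forall>i\<in>{1..k}. irreducible_tuple (ext_idx i) m (\<lambda>j. ext_pow i (A j))))"
proof -
  have P1: "\<forall>l\<in>{1..m}. \<forall>ws. set ws \<subseteq> {1..m} \<longrightarrow>
            linear (\<lambda>x. word A l ws *v x) \<and> bij_betw (\<lambda>x. word A l ws *v x) (Rg A l) (Rg A l)"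
    by (rule part1[OF rk rk2])
  have P2: "\<forall>i\<in>{1..m}. \<forall>j\<in>{1..m}. \<exists>\<phi>. linear \<phi> \<and> bij_betw \<phi> (Rg A i) (Rg A j) \<and>
            Ggrp m A j = (\<lambda>g. restrict (\<phi> \<circ> g \<circ> inv_into (Rg A i) \<phi>) (Rg A j)) ` Ggrp m A i"
    using part_a[OF rk rk2] by blast
  have P3: "(\<exists>l\<in>{1..m}. zariski_dense_GL (Rg A l) (Ggrp m A l)) \<longrightarrow>
         (\<forall>i\<in>{1..k}. irreducible_tuple (ext_idx i) m (\<lambda>j. ext_pow i (A j)))"
    using part_b[OF rk rk2] by blast
  show ?thesis using P1 P2 P3 by blast
qed

end
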